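(* Let $G$ be a $3$-regular graph and $\sigma$ a permutation of $E(G)$. Then $B(G,\sigma)$ is not odd if and only if there is a nonempty $2$-regular set of edges $C\subseteq E(G)$ in $G$ such that $\sigma(C)$ is also $2$-regular in $G$.
   Context: All graphs are finite, simple and undirected. A set of edges $C\subseteq E(G)$ is $2$-regular in $G$ if every vertex of $G$ is incident with exactly $0$ or exactly $2$ edges of $C$. $B(G,\sigma)$ is the bipartite graph with parts $V_B=V(G)\times\{0,1\}$ and $W_B=E(G)$ and edge set $\{\{(v,0),e\}: v\in e\}\cup\{\{(v,1),e\}: v\in\sigma(e)\}$. A bipartite graph with parts $V,W$ in which every vertex of $V$ has degree $3$ is called odd if for every nonempty $X\subseteq W$ there is some $v\in V$ with $|X\cap N(v)|$ odd; otherwise it is called even (not odd). *)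

theory Defs
  imports Main
begin

definition simple_graph :: "'a set \<Rightarrow> 'a set set \<Rightarrow> bool" where
  "simple_graph V E \<longleftrightarrow> finite V \<and> (\<forall>e\<in>E. e \<subseteq> V \<and> card e = 2)"

definition degree :: "'a set set \<Rightarrow> 'a \<Rightarrow> nat" where
  "degree E v = card {e\<in>E. v \<in> e}"

definition cubic :: "'a set \<Rightarrow> 'a set set \<Rightarrow> bool" where
  "cubic V E \<longleftrightarrow> (\<forall>v\<in>V. degree E v = 3)"

definition two_regular :: "'a set \<Rightarrow> 'a set set \<Rightarrow> bool" where
  "two_regular V C \<longleftrightarrow> (\<forall>v\<in>V. card {e\<in>C. v \<in> e} = 0 \<or> card {e\<in>C. v \<in> e} = 2)"

text \<open>Edge set of the bipartite graph B(G,sigma) with parts V x {0,1} and E.\<close>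
definition B_edges :: "'a set \<Rightarrow> 'a set set \<Rightarrow> ('a set \<Rightarrow> 'a set) \<Rightarrow> (('a \<times> nat) \<times> 'a set) set" where
  "B_edges V E \<sigma> = {((v,0), e) | v e. v \<in> V \<and> e \<in> E \<and> v \<in> e}
                 \<union> {((v,1), e) | v e. v \<in> V \<and> e \<in> E \<and> v \<in> \<sigma> e}"

definition odd_bipartite :: "'v set \<Rightarrow> 'w set \<Rightarrow> ('v \<times> 'w) set \<Rightarrow> bool" where
  "odd_bipartite VB WB F \<longleftrightarrow>
     (\<forall>X. X \<subseteq> WB \<and> X \<noteq> {} \<longrightarrow> (\<exists>v\<in>VB. odd (card (X \<inter> {w. (v, w) \<in> F}))))"

end

theory Submission
  imports Defs
begin

lemma B0: "v \<in> V \<Longrightarrow> X \<subseteq> E \<Longrightarrow> X \<inter> {w. ((v,0::nat),w) \<in> B_edges V E \<sigma>} = {e\<in>X. v\<in>e}"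
  unfolding B_edges_def by auto

lemma B1: "v \<in> V \<Longrightarrow> X \<subseteq> E \<Longrightarrow> X \<inter> {w. ((v,1::nat),w) \<in> B_edges V E \<sigma>} = {e\<in>X. v\<in>\<sigma> e}"
  unfolding B_edges_def by auto

lemma imgcard: "inj_on \<sigma> X \<Longrightarrow> card {f\<in>\<sigma>`X. v\<in>f} = card {e\<in>X. v\<in>\<sigma> e}"
proof -
  assume i: "inj_on \<sigma> X"
  have "{f\<in>\<sigma>`X. v\<in>f} = \<sigma> ` {e\<in>X. v\<in>\<sigma> e}" by auto
  moreover have "inj_on \<sigma> {e\<in>X. v\<in>\<sigma> e}" using i by (rule inj_on_subset) auto
  ultimately show ?thesis by (simp add: card_image)
qed

theorem mainTheorem5:
  fixes V :: "'a set" and E :: "'a set set" and \<sigma> :: "'a set \<Rightarrow> 'a set"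
  assumes "simple_graph V E"
    and "cubic V E"
    and "bij_betw \<sigma> E E"
  shows "\<not> odd_bipartite (V \<times> {0, 1}) E (B_edges V E \<sigma>)
         \<longleftrightarrow> (\<exists>C. C \<noteq> {} \<and> C \<subseteq> E \<and> two_regular V C \<and> two_regular V (\<sigma> ` C))"
proof
  have finE: "finite E"
  proof -
    have "E \<subseteq> Pow V" using assms(1) unfolding simple_graph_def by auto
    moreover have "finite V" using assms(1) unfolding simple_graph_def by auto
    ultimately show ?thesis by (meson finite_Pow_iff finite_subset)
  qed
  have le3: "card {e\<in>X. v\<in>e} \<le> 3" if "X \<subseteq> E" "v \<in> V" for X v
  proof -
    have "card {e\<in>X. v\<in>e} \<le> card {e\<in>E. v\<in>e}"
      by (rule card_mono) (use finE that in auto)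
    thus ?thesis using assms(2) that unfolding cubic_def degree_def by auto
  qed
  have ev: "n \<le> 3 \<Longrightarrow> even n \<Longrightarrow> n = 0 \<or> n = (2::nat)" for n
    by (cases n; cases "n - 1"; cases "n - 2"; cases "n - 3") auto
  have inj: "inj_on \<sigma> X" if "X \<subseteq> E" for X
    using assms(3) that by (meson bij_betw_def inj_on_subset)
  {
    assume "\<not> odd_bipartite (V \<times> {0, 1}) E (B_edges V E \<sigma>)"
    then obtain X where X: "X \<subseteq> E" "X \<noteq> {}"
      and h: "\<forall>v\<in>V \<times> {0,1}. even (card (X \<inter> {w. (v, w) \<in> B_edges V E \<sigma>}))"
      unfolding odd_bipartite_def by blast
    have sE: "\<sigma> ` X \<subseteq> E" using X(1) assms(3) by (auto simp: bij_betw_def)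
    have "two_regular V X" unfolding two_regular_def
    proof
      fix v assume v: "v \<in> V"
      have "even (card {e\<in>X. v\<in>e})" using h[rule_format, of "(v,0)"] v B0[OF v X(1)] by auto
      thus "card {e\<in>X. v\<in>e} = 0 \<or> card {e\<in>X. v\<in>e} = 2" using ev le3[OF X(1) v] by blast
    qed
    moreover have "two_regular V (\<sigma> ` X)" unfolding two_regular_def
    proof
      fix v assume v: "v \<in> V"
      have "even (card {e\<in>X. v\<in>\<sigma> e})" using h[rule_format, of "(v,1)"] v B1[OF v X(1)] by auto
      hence "even (card {f\<in>\<sigma>`X. v\<in>f})" using imgcard[OF inj[OF X(1)]] by simp
      thus "card {f\<in>\<sigma>`X. v\<in>f} = 0 \<or> card {f\<in>\<sigma>`X. v\<in>f} = 2" using ev le3[OF sE v] by blast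
    qed
    ultimately show "\<exists>C. C \<noteq> {} \<and> C \<subseteq> E \<and> two_regular V C \<and> two_regular V (\<sigma> ` C)"
      using X by blast
  }
  {
    assume "\<exists>C. C \<noteq> {} \<and> C \<subseteq> E \<and> two_regular V C \<and> two_regular V (\<sigma> ` C)"
    then obtain C where C: "C \<noteq> {}" "C \<subseteq> E" "two_regular V C" "two_regular V (\<sigma> ` C)" by blast
    have "\<forall>v\<in>V \<times> {0,1}. even (card (C \<inter> {w. (v, w) \<in> B_edges V E \<sigma>}))"
    proof
      fix p assume p: "p \<in> V \<times> {0::nat,1}"
      then obtain v i where pv: "p = (v,i)" "v \<in> V" "i = 0 \<or> i = 1" by auto
      show "even (card (C \<inter> {w. (p, w) \<in> B_edges V E \<sigma>}))"
      proof (cases "i = 0")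
        case True
        have "card {e\<in>C. v\<in>e} = 0 \<or> card {e\<in>C. v\<in>e} = 2" using C(3) pv unfolding two_regular_def by blast
        thus ?thesis using B0[OF pv(2) C(2)] pv True by auto
      next
        case False
        have "card {f\<in>\<sigma>`C. v\<in>f} = 0 \<or> card {f\<in>\<sigma>`C. v\<in>f} = 2" using C(4) pv unfolding two_regular_def by blast
        hence "card {e\<in>C. v\<in>\<sigma> e} = 0 \<or> card {e\<in>C. v\<in>\<sigma> e} = 2" using imgcard[OF inj[OF C(2)]] by simp
        thus ?thesis using B1[OF pv(2) C(2)] pv False by auto
      qed
    qed
    thus "\<not> odd_bipartite (V \<times> {0, 1}) E (B_edges V E \<sigma>)"
      unfolding odd_bipartite_def using C(1,2) by blast
  }
qed

end
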